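(* Let $$A=\begin{bmatrix} \lambda_1&a_{12}\\ 0&\lambda_2\end{bmatrix},\quad B=\begin{bmatrix} \mu_1&b_{12}\\ 0&\mu_2\end{bmatrix},\quad C=\begin{bmatrix} c_{11}&c_{12}\\ c_{21}&c_{22}\end{bmatrix}$$ and let $f(x,y)$ be such that $f\{A,B^T\}(C)$ is well defined. Then $$f\{A,B^T\}(C)= \begin{bmatrix} f(\lambda_1, \mu_1) & f(\lambda_1, \mu_2) \\ f(\lambda_2, \mu_1) & f(\lambda_2, \mu_2) \end{bmatrix} \circ C +\begin{bmatrix} c_{21}a_{12}D_x[\lambda_1, \lambda_2]f(x,\mu_1) & \Delta\\ 0& c_{21}b_{12}D_y[\mu_1,\mu_2]f(\lambda_2,y)\end{bmatrix},$$ where $\circ$ denotes the Hadamard (entrywise) product and $$\Delta:= c_{22}a_{12}D_x[\lambda_1, \lambda_2]f(x,\mu_2)+c_{11}b_{12}D_y[\mu_1,\mu_2]f(\lambda_1,y) +c_{21}a_{12}b_{12}D_{x}[\lambda_1,\lambda_2]D_{y}[\mu_1,\mu_2]f(x,y).$$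
   Context: For square matrices $A\in\mathbb C^{m\times m}$, $B\in\mathbb C^{n\times n}$ with spectra $\Lambda_A,\Lambda_B$ and $f(x,y)$ analytic in an open neighborhood of $\Lambda_A\times\Lambda_B$, the bivariate matrix function is $f\{A,B^T\}(C)=\oint_{\Gamma_A}\oint_{\Gamma_B} f(x,y)(xI-A)^{-1}C(yI-B)^{-1}\,dx\,dy$ with $\Gamma_A,\Gamma_B$ closed contours enclosing $\Lambda_A,\Lambda_B$. The bivariate divided differences are $D_x[x_1,x_2]f(x,y):=\frac{f(x_2, y)-f(x_1,y)}{x_2-x_1}$ (a function of $y$) and $D_y[y_1,y_2]f(x,y):=\frac{f(x,y_2)-f(x, y_1)}{y_2-y_1}$ (a function of $x$), with the usual derivative interpretation when the nodes coincide. *)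

theory Defs
  imports "HOL-Complex_Analysis.Complex_Analysis"
begin

text \<open>2x2 complex matrices, rows and columns indexed by the numeral type 2 (indices 1, 2).\<close>

definition mat2 :: "complex \<Rightarrow> complex \<Rightarrow> complex \<Rightarrow> complex \<Rightarrow> complex^2^2" where
  "mat2 a b c d = (\<chi> i j. if i = 1 then (if j = 1 then a else b) else (if j = 1 then c else d))"

definition minv :: "complex^'n^'n \<Rightarrow> complex^'n^'n" where
  "minv M = (SOME M'. M ** M' = mat 1 \<and> M' ** M = mat 1)"

definition mspectrum :: "complex^'n^'n \<Rightarrow> complex set" where
  "mspectrum M = {z. \<not> invertible (mat z - M)}"

definition hadamard :: "complex^'n^'m \<Rightarrow> complex^'n^'m \<Rightarrow> complex^'n^'m" where
  "hadamard M N = (\<chi> i j. M $ i $ j * N $ i $ j)"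

definition divdiff :: "(complex \<Rightarrow> complex) \<Rightarrow> complex \<Rightarrow> complex \<Rightarrow> complex" where
  "divdiff g a b = (if a = b then deriv g a else (g b - g a) / (b - a))"

definition Dx :: "(complex \<Rightarrow> complex \<Rightarrow> complex) \<Rightarrow> complex \<Rightarrow> complex \<Rightarrow> complex \<Rightarrow> complex" where
  "Dx f x1 x2 y = divdiff (\<lambda>x. f x y) x1 x2"

definition Dy :: "(complex \<Rightarrow> complex \<Rightarrow> complex) \<Rightarrow> complex \<Rightarrow> complex \<Rightarrow> complex \<Rightarrow> complex" where
  "Dy f y1 y2 x = divdiff (\<lambda>y. f x y) y1 y2"

text \<open>f analytic (holomorphic in two variables) on an open set U of C^2:
  continuous and separately holomorphic (Osgood).\<close>
definition analytic2_on :: "(complex \<Rightarrow> complex \<Rightarrow> complex) \<Rightarrow> (complex \<times> complex) set \<Rightarrow> bool" where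
  "analytic2_on f U \<longleftrightarrow> open U \<and> continuous_on U (\<lambda>(x, y). f x y) \<and>
     (\<forall>(x, y) \<in> U. (\<lambda>s. f s y) field_differentiable at x \<and> (\<lambda>t. f x t) field_differentiable at y)"

definition encloses :: "(real \<Rightarrow> complex) \<Rightarrow> complex set \<Rightarrow> complex set \<Rightarrow> bool" where
  "encloses \<gamma> S U \<longleftrightarrow> valid_path \<gamma> \<and> pathfinish \<gamma> = pathstart \<gamma> \<and>
     path_image \<gamma> \<subseteq> U - S \<and> (\<forall>z\<in>S. winding_number \<gamma> z = 1) \<and>
     (\<forall>z. z \<notin> U \<longrightarrow> winding_number \<gamma> z = 0)"

definition bivar_fun ::
  "(complex \<Rightarrow> complex \<Rightarrow> complex) \<Rightarrow> complex^'m^'m \<Rightarrow> complex^'n^'n \<Rightarrow> complex^'n^'m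
     \<Rightarrow> (real \<Rightarrow> complex) \<Rightarrow> (real \<Rightarrow> complex) \<Rightarrow> complex^'n^'m" where
  "bivar_fun f A B C gA gB =
     (\<chi> i j. (1 / (2 * pi * \<i>))^2 *
        contour_integral gA (\<lambda>x. contour_integral gB
          (\<lambda>y. f x y * (minv (mat x - A) ** C ** minv (mat y - B)) $ i $ j)))"

end

theory Submission
  imports Defs
begin


lemma cif1:
  assumes S: "open S" and h: "h holomorphic_on S" and a: "a \<in> S"
   and vp: "valid_path \<gamma>" and loop: "pathfinish \<gamma> = pathstart \<gamma>" and pim: "path_image \<gamma> \<subseteq> S - {a}"
   and wa: "winding_number \<gamma> a = 1"
   and zero: "\<And>w. w \<notin> S \<Longrightarrow> winding_number \<gamma> w = 0"
  shows "((\<lambda>w. h w / (w - a)) has_contour_integral (2*pi*\<i>*h a)) \<gamma>"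
  using Cauchy_integral_formula_global[OF S h a vp pim loop zero] wa by simp

lemma zero_kernel:
  assumes S: "open S" and a: "a \<in> S" and b: "b \<in> S"
   and vp: "valid_path \<gamma>" and loop: "pathfinish \<gamma> = pathstart \<gamma>" and pim: "path_image \<gamma> \<subseteq> S - {a,b}"
   and wa: "winding_number \<gamma> a = 1" and wb: "winding_number \<gamma> b = 1"
   and zero: "\<And>w. w \<notin> S \<Longrightarrow> winding_number \<gamma> w = 0"
  shows "((\<lambda>w. 1 / ((w - a) * (w - b))) has_contour_integral 0) \<gamma>"
proof (cases "a = b")
  case True
  have "((\<lambda>w. 1 / ((w - a) * (w - a))) has_contour_integral 0) \<gamma>"
  proof (rule Cauchy_theorem_primitive[where S="- {a}" and f="\<lambda>w. - 1 / (w - a)"])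
    show "((\<lambda>w. - 1 / (w - a)) has_field_derivative 1 / ((x - a) * (x - a))) (at x within - {a})"
      if "x \<in> - {a}" for x
      using that by (auto intro!: derivative_eq_intros simp: field_simps power2_eq_square)
  qed (use vp loop pim in auto)
  then show ?thesis using True by simp
next
  case False
  have hc: "(\<lambda>w. 1) holomorphic_on S" by simp
  have 1: "((\<lambda>w. 1 / (w - b)) has_contour_integral (2*pi*\<i>*1)) \<gamma>"
    using cif1[OF S hc b vp loop _ wb zero] pim by auto
  have 2: "((\<lambda>w. 1 / (w - a)) has_contour_integral (2*pi*\<i>*1)) \<gamma>"
    using cif1[OF S hc a vp loop _ wa zero] pim by auto
  have "((\<lambda>w. (1/(b-a)) * (1 / (w - b) - 1 / (w - a))) has_contour_integral ((1/(b-a)) * (2*pi*\<i>*1 - 2*pi*\<i>*1))) \<gamma>"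
    by (intro has_contour_integral_lmul has_contour_integral_diff 1 2)
  then have "((\<lambda>w. (1/(b-a)) * (1 / (w - b) - 1 / (w - a))) has_contour_integral 0) \<gamma>" by simp
  then show ?thesis
  proof (rule has_contour_integral_eq)
    fix x assume "x \<in> path_image \<gamma>"
    with pim have "x \<noteq> a" "x \<noteq> b" by auto
    with False show "1 / (b - a) * (1 / (x - b) - 1 / (x - a)) = 1 / ((x - a) * (x - b))"
      by (simp add: field_simps)
  qed
qed

lemma K:
  assumes S: "open S" and h: "h holomorphic_on S" and a: "a \<in> S" and b: "b \<in> S"
   and vp: "valid_path \<gamma>" and loop: "pathfinish \<gamma> = pathstart \<gamma>" and pim: "path_image \<gamma> \<subseteq> S - {a,b}"
   and wa: "winding_number \<gamma> a = 1" and wb: "winding_number \<gamma> b = 1"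
   and zero: "\<And>w. w \<notin> S \<Longrightarrow> winding_number \<gamma> w = 0"
  shows "((\<lambda>w. (u/(w-a) + v/((w-a)*(w-b)) + t/(w-b)) * h w) has_contour_integral
           (2*pi*\<i>*(u*h a + v * Defs.divdiff h a b + t*h b))) \<gamma>"
proof -
  define q where "q = (\<lambda>z. if z = a then deriv h a else (h z - h a) / (z - a))"
  have hq: "q holomorphic_on S" unfolding q_def by (rule pole_lemma_open[OF h S])
  have qb: "q b = divdiff h a b" unfolding q_def divdiff_def by auto
  have 1: "((\<lambda>w. h w / (w - a)) has_contour_integral (2*pi*\<i>*h a)) \<gamma>"
    using cif1[OF S h a vp loop _ wa zero] pim by auto
  have 2: "((\<lambda>w. h w / (w - b)) has_contour_integral (2*pi*\<i>*h b)) \<gamma>"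
    using cif1[OF S h b vp loop _ wb zero] pim by auto
  have 3: "((\<lambda>w. q w / (w - b)) has_contour_integral (2*pi*\<i>*q b)) \<gamma>"
    using cif1[OF S hq b vp loop _ wb zero] pim by auto
  have 4: "((\<lambda>w. 1 / ((w - a) * (w - b))) has_contour_integral 0) \<gamma>"
    by (rule zero_kernel[OF S a b vp loop pim wa wb zero])
  have "((\<lambda>w. u * (h w / (w - a)) + v * (q w / (w - b) + h a * (1 / ((w - a) * (w - b)))) + t * (h w / (w - b)))
        has_contour_integral (u * (2*pi*\<i>*h a) + v * (2*pi*\<i>*q b + h a * 0) + t * (2*pi*\<i>*h b))) \<gamma>"
    by (intro has_contour_integral_add has_contour_integral_lmul 1 2 3 4)
  moreover have "u * (2*pi*\<i>*h a) + v * (2*pi*\<i>*q b + h a * 0) + t * (2*pi*\<i>*h b) =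
      2*pi*\<i>*(u*h a + v * Defs.divdiff h a b + t*h b)" by (simp add: qb algebra_simps)
  ultimately have 5: "((\<lambda>w. u * (h w / (w - a)) + v * (q w / (w - b) + h a * (1 / ((w - a) * (w - b)))) + t * (h w / (w - b)))
        has_contour_integral (2*pi*\<i>*(u*h a + v * Defs.divdiff h a b + t*h b))) \<gamma>" by simp
  show ?thesis
  proof (rule has_contour_integral_eq[OF 5])
    fix x assume "x \<in> path_image \<gamma>"
    with pim have xa: "x \<noteq> a" and xb: "x \<noteq> b" by auto
    then have qx: "q x = (h x - h a) / (x - a)" by (simp add: q_def)
    from xa xb have "x - a \<noteq> 0" "x - b \<noteq> 0" "(x - a) * (x - b) \<noteq> 0" by auto
    have e1: "q x / (x - b) + h a * (1 / ((x - a) * (x - b))) = (h x - h a)/((x-a)*(x-b)) + h a/((x-a)*(x-b))"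
      unfolding qx by (simp add: divide_divide_eq_left)
    also have "\<dots> = h x / ((x-a)*(x-b))" by (simp add: add_divide_distrib[symmetric])
    finally have e2: "q x / (x - b) + h a * (1 / ((x - a) * (x - b))) = h x / ((x-a)*(x-b))" .
    show "u * (h x / (x - a)) + v * (q x / (x - b) + h a * (1 / ((x - a) * (x - b)))) + t * (h x / (x - b)) =
      (u / (x - a) + v / ((x - a) * (x - b)) + t / (x - b)) * h x"
      unfolding e2 by (simp add: distrib_right)
  qed
qed



lemma cont_param:
  assumes vp: "valid_path g" and dc: "continuous_on {0..1} (\<lambda>t. vector_derivative g (at t))"
   and Fc: "continuous_on (U \<times> path_image g) (\<lambda>(x,y). F x y)"
  shows "continuous_on U (\<lambda>x. contour_integral g (F x))"
proof -
  have gc: "continuous_on {0..1} g" using vp valid_path_imp_path path_def by blast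
  have c1: "continuous_on (U \<times> {0..1}) (\<lambda>p. (fst p, g (snd p)))"
    by (intro continuous_intros continuous_on_compose2[OF gc]) auto
  have im: "(\<lambda>p. (fst p, g (snd p))) ` (U \<times> {0..1}) \<subseteq> U \<times> path_image g"
    by (auto simp: path_image_def)
  have c2: "continuous_on (U \<times> {0..1}) (\<lambda>p. (\<lambda>(x,y). F x y) (fst p, g (snd p)))"
    by (rule continuous_on_compose2[OF Fc c1 im])
  have c3: "continuous_on (U \<times> {0..1}) (\<lambda>p. vector_derivative g (at (snd p)))"
    by (intro continuous_on_compose2[OF dc]) (auto intro: continuous_intros)
  have "continuous_on (U \<times> cbox 0 1) (\<lambda>(x, t). F x (g t) * vector_derivative g (at t))"
    using continuous_on_mult[OF c2 c3] by (simp add: case_prod_beta cbox_interval)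
  then have "continuous_on U (\<lambda>x. integral (cbox 0 1) (\<lambda>t. F x (g t) * vector_derivative g (at t)))"
    by (rule integral_continuous_on_param)
  then show ?thesis by (simp add: contour_integral_integral cbox_interval)
qed

lemma hol_param_circle:
  assumes U: "open U"
   and Fc: "continuous_on (U \<times> path_image (circlepath z r)) (\<lambda>(x,y). F x y)"
   and hol: "\<And>y. y \<in> path_image (circlepath z r) \<Longrightarrow> (\<lambda>x. F x y) holomorphic_on U"
  shows "(\<lambda>x. contour_integral (circlepath z r) (F x)) holomorphic_on U"
proof -
  let ?g = "circlepath z r"
  let ?G = "\<lambda>x. contour_integral ?g (F x)"
  have dcg: "continuous_on {0..1} (\<lambda>t. vector_derivative ?g (at t))"
    by (simp add: vector_derivative_circlepath) (intro continuous_intros)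
  have Gc: "continuous_on U ?G"
    by (rule cont_param[OF valid_path_circlepath dcg Fc])
  have swap: "contour_integral (linepath a b) ?G = contour_integral ?g (\<lambda>y. contour_integral (linepath a b) (\<lambda>x. F x y))"
    and integ: "(\<lambda>y. contour_integral (linepath a b) (\<lambda>x. F x y)) contour_integrable_on ?g"
    if ab: "closed_segment a b \<subseteq> U" for a b
  proof -
    have c: "continuous_on (path_image (linepath a b) \<times> path_image ?g) (\<lambda>(y1, y2). F y1 y2)"
      using ab by (auto intro: continuous_on_subset[OF Fc])
    show "contour_integral (linepath a b) ?G = contour_integral ?g (\<lambda>y. contour_integral (linepath a b) (\<lambda>x. F x y))"
      by (rule contour_integral_swap[OF c]) (auto intro!: continuous_intros dcg)
    have c': "continuous_on (path_image ?g \<times> path_image (linepath a b)) (\<lambda>(y, x). F x y)"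
      using continuous_on_swap_args[OF c] by simp
    have "continuous_on (path_image ?g) (\<lambda>y. contour_integral (linepath a b) (\<lambda>x. F x y))"
      by (rule cont_param[OF valid_path_linepath _ c']) (auto intro!: continuous_intros)
    then show "(\<lambda>y. contour_integral (linepath a b) (\<lambda>x. F x y)) contour_integrable_on ?g"
      by (rule contour_integrable_continuous_circlepath)
  qed
  have tri: "contour_integral (linepath a b) ?G + contour_integral (linepath b c) ?G + contour_integral (linepath c a) ?G = 0"
    if abc: "convex hull {a, b, c} \<subseteq> U" for a b c
  proof -
    have abcU: "closed_segment a b \<subseteq> U"  "closed_segment b c \<subseteq> U"  "closed_segment c a \<subseteq> U"
      using order_trans[OF segments_subset_convex_hull(1) abc] order_trans[OF segments_subset_convex_hull(3) abc]
        order_trans[OF segments_subset_convex_hull(5) abc] by auto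
    have z: "contour_integral (linepath a b) (\<lambda>x. F x y) + (contour_integral (linepath b c) (\<lambda>x. F x y)
           + contour_integral (linepath c a) (\<lambda>x. F x y)) = 0" if y: "y \<in> path_image ?g" for y
    proof -
      have h: "(\<lambda>x. F x y) holomorphic_on convex hull {a, b, c}"
        by (rule holomorphic_on_subset[OF hol[OF y] abc])
      have i: "(\<lambda>x. F x y) contour_integrable_on linepath p q" if "closed_segment p q \<subseteq> U" for p q
        using hol[OF y] U that by (auto intro!: contour_integrable_holomorphic_simple)
      have "contour_integral (linepath a b +++ linepath b c +++ linepath c a) (\<lambda>x. F x y) = 0"
        by (rule contour_integral_unique [OF Cauchy_theorem_triangle[OF h]])
      moreover have "contour_integral (linepath a b +++ linepath b c +++ linepath c a) (\<lambda>x. F x y) =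
         contour_integral (linepath a b) (\<lambda>x. F x y) + (contour_integral (linepath b c) (\<lambda>x. F x y)
           + contour_integral (linepath c a) (\<lambda>x. F x y))"
        using i[OF abcU(1)] i[OF abcU(2)] i[OF abcU(3)]
        by (simp add: contour_integrable_joinI)
      ultimately show ?thesis by simp
    qed
    have "contour_integral ?g (\<lambda>y. contour_integral (linepath a b) (\<lambda>x. F x y) + (contour_integral (linepath b c) (\<lambda>x. F x y)
           + contour_integral (linepath c a) (\<lambda>x. F x y))) = 0"
      by (rule contour_integral_eq_0) (rule z)
    then show ?thesis
      using integ[OF abcU(1)] integ[OF abcU(2)] integ[OF abcU(3)]
      by (simp add: swap[OF abcU(1)] swap[OF abcU(2)] swap[OF abcU(3)] contour_integrable_add contour_integral_add add_ac)
  qed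
  have "?G analytic_on U"
    by (rule Morera_triangle[OF Gc U]) (use tri in blast)
  then show ?thesis by (rule analytic_imp_holomorphic)
qed



lemma two_ne_one: "(2::2) \<noteq> 1" by simp

lemma mat2_nth [simp]:
  "mat2 a b c d $ 1 $ 1 = a" "mat2 a b c d $ 1 $ 2 = b" "mat2 a b c d $ 2 $ 1 = c" "mat2 a b c d $ 2 $ 2 = d"
  by (simp_all add: mat2_def)

lemma mat2_mult: "mat2 a b c d ** mat2 a' b' c' d' = mat2 (a*a'+b*c') (a*b'+b*d') (c*a'+d*c') (c*b'+d*d')"
  unfolding vec_eq_iff forall_2 matrix_matrix_mult_def sum_2 by (simp add: mat2_def)

lemma mat_mat2: "(mat k :: complex^2^2) = mat2 k 0 0 k"
  unfolding vec_eq_iff forall_2 by (simp add: mat_def mat2_def)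

lemma mat2_diff: "mat2 a b c d - mat2 a' b' c' d' = mat2 (a-a') (b-b') (c-c') (d-d')"
  unfolding vec_eq_iff forall_2 by (simp add: mat2_def)

lemma minv_unique:
  fixes M E :: "complex^'n^'n"
  assumes "M ** E = mat 1" "E ** M = mat 1"
  shows "minv M = E"
proof -
  have "\<exists>M'. M ** M' = mat 1 \<and> M' ** M = mat 1" using assms by blast
  then have m: "M ** minv M = mat 1 \<and> minv M ** M = mat 1"
    unfolding minv_def by (rule someI_ex)
  have "minv M = minv M ** (M ** E)" using assms by (simp add: matrix_mul_rid)
  also have "\<dots> = (minv M ** M) ** E" by (simp add: matrix_mul_assoc)
  also have "\<dots> = E" using m by (simp add: matrix_mul_lid)
  finally show ?thesis .
qed

lemma minv_tri:
  assumes "x \<noteq> p" "x \<noteq> q"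
  shows "minv (mat x - mat2 p s 0 q) = mat2 (1/(x-p)) (s/((x-p)*(x-q))) 0 (1/(x-q))"
proof (rule minv_unique)
  from assms have np: "x - p \<noteq> 0" and nq: "x - q \<noteq> 0" by auto
  have e: "mat x - mat2 p s 0 q = mat2 (x-p) (-s) 0 (x-q)"
    by (simp add: mat_mat2 mat2_diff)
  have i1: "(x-p) * (1/(x-p)) = 1" "(1/(x-p)) * (x-p) = 1" using np by simp_all
  have i2: "(x-q) * (1/(x-q)) = 1" "(1/(x-q)) * (x-q) = 1" using nq by simp_all
  have i3: "(x-p) * (s/((x-p)*(x-q))) = s/(x-q)" using np by simp
  have i4: "s/((x-p)*(x-q)) * (x-q) = s/(x-p)" using nq by simp
  show "(mat x - mat2 p s 0 q) ** mat2 (1/(x-p)) (s/((x-p)*(x-q))) 0 (1/(x-q)) = mat 1"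
    unfolding mat_mat2 mat2_diff mat2_mult using np nq by (simp add: i3)
  show "mat2 (1/(x-p)) (s/((x-p)*(x-q))) 0 (1/(x-q)) ** (mat x - mat2 p s 0 q) = mat 1"
    unfolding mat_mat2 mat2_diff mat2_mult using np nq by (simp add: i4)
qed

lemma det_tri: "det (mat z - mat2 p s 0 q) = (z - p) * (z - q)"
  unfolding mat_mat2 mat2_diff det_2 by simp

lemma mspectrum_tri: "mspectrum (mat2 p s 0 q) = {p, q}"
  unfolding mspectrum_def invertible_det_nz det_tri by auto


theorem corollary2p3:
  fixes l1 l2 a12 m1 m2 b12 c11 c12 c21 c22 :: complex
    and f :: "complex \<Rightarrow> complex \<Rightarrow> complex"
    and UA UB :: "complex set" and gA gB :: "real \<Rightarrow> complex"
  defines "A \<equiv> mat2 l1 a12 0 l2"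
      and "B \<equiv> mat2 m1 b12 0 m2"
      and "C \<equiv> mat2 c11 c12 c21 c22"
  assumes "open UA" and "open UB"
      and "mspectrum A \<subseteq> UA" and "mspectrum B \<subseteq> UB"
      and "analytic2_on f (UA \<times> UB)"
      and "encloses gA (mspectrum A) UA" and "encloses gB (mspectrum B) UB"
  shows "bivar_fun f A B C gA gB =
     hadamard (mat2 (f l1 m1) (f l1 m2) (f l2 m1) (f l2 m2)) C +
     mat2 (c21 * a12 * Dx f l1 l2 m1)
          (c22 * a12 * Dx f l1 l2 m2 + c11 * b12 * Dy f m1 m2 l1
             + c21 * a12 * b12 * divdiff (\<lambda>x. Dy f m1 m2 x) l1 l2)
          0
          (c21 * b12 * Dy f m1 m2 l2)"
proof -
  note UA = \<open>open UA\<close> and UB = \<open>open UB\<close>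
  have spA: "mspectrum A = {l1, l2}" unfolding A_def by (rule mspectrum_tri)
  have spB: "mspectrum B = {m1, m2}" unfolding B_def by (rule mspectrum_tri)
  have l1: "l1 \<in> UA" and l2: "l2 \<in> UA" using assms(6) spA by auto
  have m1: "m1 \<in> UB" and m2: "m2 \<in> UB" using assms(7) spB by auto
  have gA: "valid_path gA" "pathfinish gA = pathstart gA" "path_image gA \<subseteq> UA - {l1, l2}"
      "winding_number gA l1 = 1" "winding_number gA l2 = 1" "\<And>w. w \<notin> UA \<Longrightarrow> winding_number gA w = 0"
    using assms(9) spA unfolding encloses_def by auto
  have gB: "valid_path gB" "pathfinish gB = pathstart gB" "path_image gB \<subseteq> UB - {m1, m2}"
      "winding_number gB m1 = 1" "winding_number gB m2 = 1" "\<And>w. w \<notin> UB \<Longrightarrow> winding_number gB w = 0"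
    using assms(10) spB unfolding encloses_def by auto
  have fc: "continuous_on (UA \<times> UB) (\<lambda>(x, y). f x y)"
   and fd: "\<And>x y. x \<in> UA \<Longrightarrow> y \<in> UB \<Longrightarrow> (\<lambda>s. f s y) field_differentiable at x \<and> (\<lambda>t. f x t) field_differentiable at y"
    using assms(8) unfolding analytic2_on_def by auto
  have holB: "(\<lambda>y. f x y) holomorphic_on UB" if "x \<in> UA" for x
    unfolding holomorphic_on_def using fd[OF that] by (auto intro: field_differentiable_at_within)
  have holA: "(\<lambda>x. f x y) holomorphic_on UA" if "y \<in> UB" for y
    unfolding holomorphic_on_def using fd[OF _ that] by (auto intro: field_differentiable_at_within)
  have DyH: "(\<lambda>x. Dy f m1 m2 x) holomorphic_on UA"
  proof (cases "m1 = m2")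
    case False
    then show ?thesis unfolding Dy_def divdiff_def
      using holA[OF m1] holA[OF m2] by (auto intro!: holomorphic_intros)
  next
    case True
    obtain r where r: "r > 0" "cball m1 r \<subseteq> UB" using UB m1 open_contains_cball by blast
    define F where "F = (\<lambda>x u. f x u / (u - m1)^2)"
    have pim: "path_image (circlepath m1 r) = sphere m1 r" using r by (simp add: path_image_circlepath_nonneg)
    have sph: "sphere m1 r \<subseteq> UB - {m1}" using r by auto
    have eq: "Dy f m1 m2 x = 1 / (2 * of_real pi * \<i>) * contour_integral (circlepath m1 r) (F x)" if x: "x \<in> UA" for x
    proof -
      have "continuous_on (cball m1 r) (\<lambda>y. f x y)"
        using holB[OF x] r holomorphic_on_imp_continuous_on holomorphic_on_subset by blast
      moreover have "(\<lambda>y. f x y) holomorphic_on ball m1 r"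
        using holB[OF x] r by (meson ball_subset_cball holomorphic_on_subset order_trans)
      ultimately have "((\<lambda>y. f x y) has_field_derivative (1 / (2 * of_real pi * \<i>) * contour_integral (circlepath m1 r) (\<lambda>u. f x u / (u - m1)^2))) (at m1)"
        using r by (intro Cauchy_derivative_integral_circlepath) auto
      then show ?thesis using True unfolding Dy_def divdiff_def F_def by (simp add: DERIV_imp_deriv)
    qed
    have Fc: "continuous_on (UA \<times> path_image (circlepath m1 r)) (\<lambda>(x, y). F x y)"
    proof -
      have s: "UA \<times> path_image (circlepath m1 r) \<subseteq> UA \<times> UB" using sph pim by auto
      have "continuous_on (UA \<times> path_image (circlepath m1 r)) (\<lambda>p. (\<lambda>(x, y). f x y) p / (snd p - m1)^2)"
        using sph pim by (intro continuous_intros continuous_on_subset[OF fc s]) auto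
      then show ?thesis unfolding F_def by (simp add: case_prod_beta)
    qed
    have Fh: "(\<lambda>x. F x y) holomorphic_on UA" if "y \<in> path_image (circlepath m1 r)" for y
    proof -
      have "y \<in> UB" "y \<noteq> m1" using that sph pim by auto
      then show ?thesis unfolding F_def using holA by (auto intro!: holomorphic_intros)
    qed
    have "(\<lambda>x. 1 / (2 * of_real pi * \<i>) * contour_integral (circlepath m1 r) (F x)) holomorphic_on UA"
      by (intro holomorphic_intros hol_param_circle[OF UA Fc Fh])
    then show ?thesis by (rule holomorphic_transform) (use eq in auto)
  qed
  have inner: "((\<lambda>y. (p/(y-m1) + q/((y-m1)*(y-m2)) + r/(y-m2)) * f x y) has_contour_integral
        (2*pi*\<i>*(p*f x m1 + q*Dy f m1 m2 x + r*f x m2))) gB" if "x \<in> UA" for x p q r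
    using K[OF UB holB[OF that] m1 m2 gB] unfolding Dy_def .
  have outer: "((\<lambda>x. (u/(x-l1) + v/((x-l1)*(x-l2)) + w/(x-l2)) * h x) has_contour_integral
        (2*pi*\<i>*(u*h l1 + v * Defs.divdiff h l1 l2 + w*h l2))) gA" if "h holomorphic_on UA" for h u v w
    by (rule K[OF UA that l1 l2 gA])
  have E: "contour_integral gA (\<lambda>x. contour_integral gB (\<lambda>y.
       ((u1/(x-l1) + v1/((x-l1)*(x-l2)) + w1/(x-l2))/(y-m1)
       + (u2/(x-l1) + v2/((x-l1)*(x-l2)) + w2/(x-l2))/((y-m1)*(y-m2))
       + (u3/(x-l1) + v3/((x-l1)*(x-l2)) + w3/(x-l2))/(y-m2)) * f x y))
     = (2*pi*\<i>)^2 * ((u1*f l1 m1 + v1*Dx f l1 l2 m1 + w1*f l2 m1)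
         + (u2*Dy f m1 m2 l1 + v2*divdiff (\<lambda>x. Dy f m1 m2 x) l1 l2 + w2*Dy f m1 m2 l2)
         + (u3*f l1 m2 + v3*Dx f l1 l2 m2 + w3*f l2 m2))"
    for u1 v1 w1 u2 v2 w2 u3 v3 w3
  proof -
    let ?P = "\<lambda>u v w x. u/(x-l1) + v/((x-l1)*(x-l2)) + w/(x-l2)"
    have "contour_integral gA (\<lambda>x. contour_integral gB (\<lambda>y.
       (?P u1 v1 w1 x/(y-m1) + ?P u2 v2 w2 x/((y-m1)*(y-m2)) + ?P u3 v3 w3 x/(y-m2)) * f x y))
      = contour_integral gA (\<lambda>x. 2*pi*\<i>*(?P u1 v1 w1 x * f x m1 + ?P u2 v2 w2 x * Dy f m1 m2 x + ?P u3 v3 w3 x * f x m2))"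
    proof (rule contour_integral_eq)
      fix x assume "x \<in> path_image gA"
      then have "x \<in> UA" using gA by auto
      then show "contour_integral gB (\<lambda>y. (?P u1 v1 w1 x/(y-m1) + ?P u2 v2 w2 x/((y-m1)*(y-m2)) + ?P u3 v3 w3 x/(y-m2)) * f x y)
         = 2*pi*\<i>*(?P u1 v1 w1 x * f x m1 + ?P u2 v2 w2 x * Dy f m1 m2 x + ?P u3 v3 w3 x * f x m2)"
        by (rule contour_integral_unique[OF inner])
    qed
    also have "\<dots> = 2*pi*\<i>*(2*pi*\<i>*(u1*f l1 m1 + v1*Dx f l1 l2 m1 + w1*f l2 m1)
         + 2*pi*\<i>*(u2*Dy f m1 m2 l1 + v2*divdiff (\<lambda>x. Dy f m1 m2 x) l1 l2 + w2*Dy f m1 m2 l2)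
         + 2*pi*\<i>*(u3*f l1 m2 + v3*Dx f l1 l2 m2 + w3*f l2 m2))"
      unfolding Dx_def
      by (intro contour_integral_unique has_contour_integral_lmul has_contour_integral_add
            outer holA m1 m2 DyH)
    finally show ?thesis by (simp add: algebra_simps power2_eq_square)
  qed
  have RA: "minv (mat x - A) = mat2 (1/(x-l1)) (a12/((x-l1)*(x-l2))) 0 (1/(x-l2))" if "x \<in> path_image gA" for x
    unfolding A_def using that gA(3) by (intro minv_tri) auto
  have RB: "minv (mat y - B) = mat2 (1/(y-m1)) (b12/((y-m1)*(y-m2))) 0 (1/(y-m2))" if "y \<in> path_image gB" for y
    unfolding B_def using that gB(3) by (intro minv_tri) auto
  have e11: "contour_integral gA (\<lambda>x. contour_integral gB (\<lambda>y. f x y * (minv (mat x - A) ** C ** minv (mat y - B)) $ 1 $ 1))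
      = (2*pi*\<i>)^2 * (c11 * f l1 m1 + c21 * a12 * Dx f l1 l2 m1)"
  proof -
    have "contour_integral gA (\<lambda>x. contour_integral gB (\<lambda>y. f x y * (minv (mat x - A) ** C ** minv (mat y - B)) $ 1 $ 1))
      = contour_integral gA (\<lambda>x. contour_integral gB (\<lambda>y. ((c11/(x-l1) + c21*a12/((x-l1)*(x-l2)) + 0/(x-l2))/(y-m1) + (0/(x-l1) + 0/((x-l1)*(x-l2)) + 0/(x-l2))/((y-m1)*(y-m2)) + (0/(x-l1) + 0/((x-l1)*(x-l2)) + 0/(x-l2))/(y-m2)) * f x y))"
    proof (intro contour_integral_eq)
      fix x y assume x: "x \<in> path_image gA" and y: "y \<in> path_image gB"
      then have "x - l1 \<noteq> 0" "x - l2 \<noteq> 0" "y - m1 \<noteq> 0" "y - m2 \<noteq> 0" using gA(3) gB(3) by auto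
      then show "f x y * (minv (mat x - A) ** C ** minv (mat y - B)) $ 1 $ 1 = ((c11/(x-l1) + c21*a12/((x-l1)*(x-l2)) + 0/(x-l2))/(y-m1) + (0/(x-l1) + 0/((x-l1)*(x-l2)) + 0/(x-l2))/((y-m1)*(y-m2)) + (0/(x-l1) + 0/((x-l1)*(x-l2)) + 0/(x-l2))/(y-m2)) * f x y"
        unfolding RA[OF x] RB[OF y] C_def mat2_mult mat2_nth by (simp add: field_simps)
    qed
    also have "\<dots> = (2*pi*\<i>)^2 * ((c11*f l1 m1 + c21*a12*Dx f l1 l2 m1 + 0*f l2 m1) + (0*Dy f m1 m2 l1 + 0*divdiff (\<lambda>x. Dy f m1 m2 x) l1 l2 + 0*Dy f m1 m2 l2) + (0*f l1 m2 + 0*Dx f l1 l2 m2 + 0*f l2 m2))" by (rule E)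
    also have "\<dots> = (2*pi*\<i>)^2 * (c11 * f l1 m1 + c21 * a12 * Dx f l1 l2 m1)" by (simp add: algebra_simps)
    finally show ?thesis .
  qed
  have e12: "contour_integral gA (\<lambda>x. contour_integral gB (\<lambda>y. f x y * (minv (mat x - A) ** C ** minv (mat y - B)) $ 1 $ 2))
      = (2*pi*\<i>)^2 * (c12 * f l1 m2 + (c22 * a12 * Dx f l1 l2 m2 + c11 * b12 * Dy f m1 m2 l1 + c21 * a12 * b12 * divdiff (\<lambda>x. Dy f m1 m2 x) l1 l2))"
  proof -
    have "contour_integral gA (\<lambda>x. contour_integral gB (\<lambda>y. f x y * (minv (mat x - A) ** C ** minv (mat y - B)) $ 1 $ 2))
      = contour_integral gA (\<lambda>x. contour_integral gB (\<lambda>y. ((0/(x-l1) + 0/((x-l1)*(x-l2)) + 0/(x-l2))/(y-m1) + (b12*c11/(x-l1) + b12*c21*a12/((x-l1)*(x-l2)) + 0/(x-l2))/((y-m1)*(y-m2)) + (c12/(x-l1) + c22*a12/((x-l1)*(x-l2)) + 0/(x-l2))/(y-m2)) * f x y))"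
    proof (intro contour_integral_eq)
      fix x y assume x: "x \<in> path_image gA" and y: "y \<in> path_image gB"
      then have "x - l1 \<noteq> 0" "x - l2 \<noteq> 0" "y - m1 \<noteq> 0" "y - m2 \<noteq> 0" using gA(3) gB(3) by auto
      then show "f x y * (minv (mat x - A) ** C ** minv (mat y - B)) $ 1 $ 2 = ((0/(x-l1) + 0/((x-l1)*(x-l2)) + 0/(x-l2))/(y-m1) + (b12*c11/(x-l1) + b12*c21*a12/((x-l1)*(x-l2)) + 0/(x-l2))/((y-m1)*(y-m2)) + (c12/(x-l1) + c22*a12/((x-l1)*(x-l2)) + 0/(x-l2))/(y-m2)) * f x y"
        unfolding RA[OF x] RB[OF y] C_def mat2_mult mat2_nth by (simp add: field_simps)
    qed
    also have "\<dots> = (2*pi*\<i>)^2 * ((0*f l1 m1 + 0*Dx f l1 l2 m1 + 0*f l2 m1) + (b12*c11*Dy f m1 m2 l1 + b12*c21*a12*divdiff (\<lambda>x. Dy f m1 m2 x) l1 l2 + 0*Dy f m1 m2 l2) + (c12*f l1 m2 + c22*a12*Dx f l1 l2 m2 + 0*f l2 m2))" by (rule E)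
    also have "\<dots> = (2*pi*\<i>)^2 * (c12 * f l1 m2 + (c22 * a12 * Dx f l1 l2 m2 + c11 * b12 * Dy f m1 m2 l1 + c21 * a12 * b12 * divdiff (\<lambda>x. Dy f m1 m2 x) l1 l2))" by (simp add: algebra_simps)
    finally show ?thesis .
  qed
  have e21: "contour_integral gA (\<lambda>x. contour_integral gB (\<lambda>y. f x y * (minv (mat x - A) ** C ** minv (mat y - B)) $ 2 $ 1))
      = (2*pi*\<i>)^2 * (c21 * f l2 m1)"
  proof -
    have "contour_integral gA (\<lambda>x. contour_integral gB (\<lambda>y. f x y * (minv (mat x - A) ** C ** minv (mat y - B)) $ 2 $ 1))
      = contour_integral gA (\<lambda>x. contour_integral gB (\<lambda>y. ((0/(x-l1) + 0/((x-l1)*(x-l2)) + c21/(x-l2))/(y-m1) + (0/(x-l1) + 0/((x-l1)*(x-l2)) + 0/(x-l2))/((y-m1)*(y-m2)) + (0/(x-l1) + 0/((x-l1)*(x-l2)) + 0/(x-l2))/(y-m2)) * f x y))"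
    proof (intro contour_integral_eq)
      fix x y assume x: "x \<in> path_image gA" and y: "y \<in> path_image gB"
      then have "x - l1 \<noteq> 0" "x - l2 \<noteq> 0" "y - m1 \<noteq> 0" "y - m2 \<noteq> 0" using gA(3) gB(3) by auto
      then show "f x y * (minv (mat x - A) ** C ** minv (mat y - B)) $ 2 $ 1 = ((0/(x-l1) + 0/((x-l1)*(x-l2)) + c21/(x-l2))/(y-m1) + (0/(x-l1) + 0/((x-l1)*(x-l2)) + 0/(x-l2))/((y-m1)*(y-m2)) + (0/(x-l1) + 0/((x-l1)*(x-l2)) + 0/(x-l2))/(y-m2)) * f x y"
        unfolding RA[OF x] RB[OF y] C_def mat2_mult mat2_nth by (simp add: field_simps)
    qed
    also have "\<dots> = (2*pi*\<i>)^2 * ((0*f l1 m1 + 0*Dx f l1 l2 m1 + c21*f l2 m1) + (0*Dy f m1 m2 l1 + 0*divdiff (\<lambda>x. Dy f m1 m2 x) l1 l2 + 0*Dy f m1 m2 l2) + (0*f l1 m2 + 0*Dx f l1 l2 m2 + 0*f l2 m2))" by (rule E)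
    also have "\<dots> = (2*pi*\<i>)^2 * (c21 * f l2 m1)" by (simp add: algebra_simps)
    finally show ?thesis .
  qed
  have e22: "contour_integral gA (\<lambda>x. contour_integral gB (\<lambda>y. f x y * (minv (mat x - A) ** C ** minv (mat y - B)) $ 2 $ 2))
      = (2*pi*\<i>)^2 * (c22 * f l2 m2 + c21 * b12 * Dy f m1 m2 l2)"
  proof -
    have "contour_integral gA (\<lambda>x. contour_integral gB (\<lambda>y. f x y * (minv (mat x - A) ** C ** minv (mat y - B)) $ 2 $ 2))
      = contour_integral gA (\<lambda>x. contour_integral gB (\<lambda>y. ((0/(x-l1) + 0/((x-l1)*(x-l2)) + 0/(x-l2))/(y-m1) + (0/(x-l1) + 0/((x-l1)*(x-l2)) + c21*b12/(x-l2))/((y-m1)*(y-m2)) + (0/(x-l1) + 0/((x-l1)*(x-l2)) + c22/(x-l2))/(y-m2)) * f x y))"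
    proof (intro contour_integral_eq)
      fix x y assume x: "x \<in> path_image gA" and y: "y \<in> path_image gB"
      then have "x - l1 \<noteq> 0" "x - l2 \<noteq> 0" "y - m1 \<noteq> 0" "y - m2 \<noteq> 0" using gA(3) gB(3) by auto
      then show "f x y * (minv (mat x - A) ** C ** minv (mat y - B)) $ 2 $ 2 = ((0/(x-l1) + 0/((x-l1)*(x-l2)) + 0/(x-l2))/(y-m1) + (0/(x-l1) + 0/((x-l1)*(x-l2)) + c21*b12/(x-l2))/((y-m1)*(y-m2)) + (0/(x-l1) + 0/((x-l1)*(x-l2)) + c22/(x-l2))/(y-m2)) * f x y"
        unfolding RA[OF x] RB[OF y] C_def mat2_mult mat2_nth by (simp add: field_simps)
    qed
    also have "\<dots> = (2*pi*\<i>)^2 * ((0*f l1 m1 + 0*Dx f l1 l2 m1 + 0*f l2 m1) + (0*Dy f m1 m2 l1 + 0*divdiff (\<lambda>x. Dy f m1 m2 x) l1 l2 + c21*b12*Dy f m1 m2 l2) + (0*f l1 m2 + 0*Dx f l1 l2 m2 + c22*f l2 m2))" by (rule E)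
    also have "\<dots> = (2*pi*\<i>)^2 * (c22 * f l2 m2 + c21 * b12 * Dy f m1 m2 l2)" by (simp add: algebra_simps)
    finally show ?thesis .
  qed
  have ent: "bivar_fun f A B C gA gB $ i $ j = (1/(2*pi*\<i>))^2 * contour_integral gA (\<lambda>x. contour_integral gB (\<lambda>y. f x y * (minv (mat x - A) ** C ** minv (mat y - B)) $ i $ j))" for i j
    by (simp add: bivar_fun_def)
  have pi: "(1/(2*pi*\<i>))^2 * ((2*pi*\<i>)^2 * z) = z" for z :: complex
    by (simp add: power2_eq_square field_simps)
  show ?thesis
    unfolding vec_eq_iff forall_2 ent e11 e12 e21 e22 pi
    by (simp add: hadamard_def C_def)
qed

end
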